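(* Let $\mathcal A$ be a super weakly amenable Banach algebra. Then (i) the linear span of $\{ab:a,b\in\mathcal A\}$ is dense in $\mathcal A$; and (ii) there are no nonzero continuous point derivations on $\mathcal A$: for every nonzero continuous multiplicative linear functional $\varphi:\mathcal A\to\mathbb C$, every continuous linear functional $d:\mathcal A\to\mathbb C$ with $d(ab)=d(a)\varphi(b)+\varphi(a)d(b)$ for all $a,b\in\mathcal A$ is zero.
   Context: For a continuous homomorphism $\varphi:\mathcal A\to\mathcal B$ of Banach algebras, $\mathcal B_\varphi$ is $\mathcal B$ as an $\mathcal A$-bimodule with $a\cdot b=\varphi(a)b$, $b\cdot a=b\varphi(a)$, and its dual $\mathcal B_\varphi^*$ is an $\mathcal A$-bimodule via $\langle x,a\cdot f\rangle=\langle x\cdot a,f\rangle$, $\langle x,f\cdot a\rangle=\langle a\cdot x,f\rangle$. A derivation $d:\mathcal A\to X$ is a bounded linear map with $d(ab)=d(a)\cdot b+a\cdot d(b)$. $\mathcal A$ is called super weakly amenable if for every Banach algebra $\mathcal B$, every continuous homomorphism $\varphi:\mathcal A\to\mathcal B$ and every derivation $d:\mathcal A\to\mathcal B_\varphi^*$, one has $\langle d(a),\varphi(b)\rangle+\langle d(b),\varphi(a)\rangle=0$ for all $a,b\in\mathcal A$. *)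

theory Defs
  imports Complex_Main
begin

text \<open>Complex Banach algebras, rendered explicitly as structures on a carrier set
  (Isabelle/HOL has no type class of complex normed spaces).\<close>

record 'a cba =
  ba_car   :: "'a set"
  ba_zero  :: 'a
  ba_add   :: "'a \<Rightarrow> 'a \<Rightarrow> 'a"
  ba_smul  :: "complex \<Rightarrow> 'a \<Rightarrow> 'a"
  ba_mul   :: "'a \<Rightarrow> 'a \<Rightarrow> 'a"
  ba_norm  :: "'a \<Rightarrow> real"

definition ba_diff :: "'a cba \<Rightarrow> 'a \<Rightarrow> 'a \<Rightarrow> 'a" where
  "ba_diff A x y = ba_add A x (ba_smul A (-1) y)"

definition banach_algebra :: "'a cba \<Rightarrow> bool" where
  "banach_algebra A \<longleftrightarrow>
     ba_zero A \<in> ba_car A \<and>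
     (\<forall>x\<in>ba_car A. \<forall>y\<in>ba_car A. ba_add A x y \<in> ba_car A) \<and>
     (\<forall>c. \<forall>x\<in>ba_car A. ba_smul A c x \<in> ba_car A) \<and>
     (\<forall>x\<in>ba_car A. \<forall>y\<in>ba_car A. ba_mul A x y \<in> ba_car A) \<and>
     \<comment> \<open>complex vector space\<close>
     (\<forall>x\<in>ba_car A. \<forall>y\<in>ba_car A. \<forall>z\<in>ba_car A.
        ba_add A (ba_add A x y) z = ba_add A x (ba_add A y z)) \<and>
     (\<forall>x\<in>ba_car A. \<forall>y\<in>ba_car A. ba_add A x y = ba_add A y x) \<and>
     (\<forall>x\<in>ba_car A. ba_add A x (ba_zero A) = x) \<and>
     (\<forall>x\<in>ba_car A. ba_add A x (ba_smul A (-1) x) = ba_zero A) \<and>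
     (\<forall>x\<in>ba_car A. ba_smul A 1 x = x) \<and>
     (\<forall>a b. \<forall>x\<in>ba_car A. ba_smul A a (ba_smul A b x) = ba_smul A (a * b) x) \<and>
     (\<forall>a b. \<forall>x\<in>ba_car A. ba_smul A (a + b) x = ba_add A (ba_smul A a x) (ba_smul A b x)) \<and>
     (\<forall>a. \<forall>x\<in>ba_car A. \<forall>y\<in>ba_car A.
        ba_smul A a (ba_add A x y) = ba_add A (ba_smul A a x) (ba_smul A a y)) \<and>
     \<comment> \<open>associative algebra\<close>
     (\<forall>x\<in>ba_car A. \<forall>y\<in>ba_car A. \<forall>z\<in>ba_car A.
        ba_mul A (ba_mul A x y) z = ba_mul A x (ba_mul A y z)) \<and>
     (\<forall>x\<in>ba_car A. \<forall>y\<in>ba_car A. \<forall>z\<in>ba_car A.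
        ba_mul A x (ba_add A y z) = ba_add A (ba_mul A x y) (ba_mul A x z)) \<and>
     (\<forall>x\<in>ba_car A. \<forall>y\<in>ba_car A. \<forall>z\<in>ba_car A.
        ba_mul A (ba_add A x y) z = ba_add A (ba_mul A x z) (ba_mul A y z)) \<and>
     (\<forall>a. \<forall>x\<in>ba_car A. \<forall>y\<in>ba_car A.
        ba_mul A (ba_smul A a x) y = ba_smul A a (ba_mul A x y) \<and>
        ba_mul A x (ba_smul A a y) = ba_smul A a (ba_mul A x y)) \<and>
     \<comment> \<open>submultiplicative norm\<close>
     (\<forall>x\<in>ba_car A. 0 \<le> ba_norm A x) \<and>
     (\<forall>x\<in>ba_car A. ba_norm A x = 0 \<longleftrightarrow> x = ba_zero A) \<and>
     (\<forall>x\<in>ba_car A. \<forall>y\<in>ba_car A. ba_norm A (ba_add A x y) \<le> ba_norm A x + ba_norm A y) \<and>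
     (\<forall>a. \<forall>x\<in>ba_car A. ba_norm A (ba_smul A a x) = cmod a * ba_norm A x) \<and>
     (\<forall>x\<in>ba_car A. \<forall>y\<in>ba_car A. ba_norm A (ba_mul A x y) \<le> ba_norm A x * ba_norm A y) \<and>
     \<comment> \<open>completeness\<close>
     (\<forall>f. (\<forall>n::nat. f n \<in> ba_car A) \<and>
          (\<forall>e>0. \<exists>N. \<forall>m\<ge>N. \<forall>n\<ge>N. ba_norm A (ba_diff A (f m) (f n)) < e) \<longrightarrow>
          (\<exists>l\<in>ba_car A. \<forall>e>0. \<exists>N. \<forall>n\<ge>N. ba_norm A (ba_diff A (f n) l) < e))"

definition cont_functional :: "'a cba \<Rightarrow> ('a \<Rightarrow> complex) \<Rightarrow> bool" where
  "cont_functional A f \<longleftrightarrow>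
     (\<forall>x\<in>ba_car A. \<forall>y\<in>ba_car A. f (ba_add A x y) = f x + f y) \<and>
     (\<forall>c. \<forall>x\<in>ba_car A. f (ba_smul A c x) = c * f x) \<and>
     (\<exists>K. \<forall>x\<in>ba_car A. cmod (f x) \<le> K * ba_norm A x)"

definition cont_hom :: "'a cba \<Rightarrow> 'b cba \<Rightarrow> ('a \<Rightarrow> 'b) \<Rightarrow> bool" where
  "cont_hom A B \<phi> \<longleftrightarrow>
     (\<forall>x\<in>ba_car A. \<phi> x \<in> ba_car B) \<and>
     (\<forall>x\<in>ba_car A. \<forall>y\<in>ba_car A. \<phi> (ba_add A x y) = ba_add B (\<phi> x) (\<phi> y)) \<and>
     (\<forall>c. \<forall>x\<in>ba_car A. \<phi> (ba_smul A c x) = ba_smul B c (\<phi> x)) \<and>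
     (\<forall>x\<in>ba_car A. \<forall>y\<in>ba_car A. \<phi> (ba_mul A x y) = ba_mul B (\<phi> x) (\<phi> y)) \<and>
     (\<exists>K. \<forall>x\<in>ba_car A. ba_norm B (\<phi> x) \<le> K * ba_norm A x)"

text \<open>Derivations \<open>d : A \<rightarrow> B_\<phi>^*\<close>; elements of the dual \<open>B^*\<close> are represented by
  continuous linear functionals \<open>'b \<Rightarrow> complex\<close> (only their values on the carrier matter).
  The module actions are \<open>\<langle>x, f\<cdot>a\<rangle> = \<langle>\<phi>(a) x, f\<rangle>\<close> and \<open>\<langle>x, a\<cdot>f\<rangle> = \<langle>x \<phi>(a), f\<rangle>\<close>.\<close>
definition dual_derivation ::
    "'a cba \<Rightarrow> 'b cba \<Rightarrow> ('a \<Rightarrow> 'b) \<Rightarrow> ('a \<Rightarrow> 'b \<Rightarrow> complex) \<Rightarrow> bool" where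
  "dual_derivation A B \<phi> d \<longleftrightarrow>
     (\<forall>a\<in>ba_car A. cont_functional B (d a)) \<and>
     (\<forall>a\<in>ba_car A. \<forall>b\<in>ba_car A. \<forall>x\<in>ba_car B. d (ba_add A a b) x = d a x + d b x) \<and>
     (\<forall>c. \<forall>a\<in>ba_car A. \<forall>x\<in>ba_car B. d (ba_smul A c a) x = c * d a x) \<and>
     (\<exists>K. \<forall>a\<in>ba_car A. \<forall>x\<in>ba_car B. cmod (d a x) \<le> K * ba_norm A a * ba_norm B x) \<and>
     (\<forall>a\<in>ba_car A. \<forall>b\<in>ba_car A. \<forall>x\<in>ba_car B.
        d (ba_mul A a b) x = d a (ba_mul B (\<phi> b) x) + d b (ba_mul B x (\<phi> a)))"

text \<open>Super weak amenability.  The Banach algebras \<open>B\<close> range over all Banach algebra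
  structures whose carrier lies in the same HOL type as that of \<open>A\<close>.\<close>
definition super_weakly_amenable :: "'a cba \<Rightarrow> bool" where
  "super_weakly_amenable A \<longleftrightarrow>
     (\<forall>(B::'a cba). \<forall>\<phi> d. banach_algebra B \<and> cont_hom A B \<phi> \<and> dual_derivation A B \<phi> d \<longrightarrow>
        (\<forall>a\<in>ba_car A. \<forall>b\<in>ba_car A. d a (\<phi> b) + d b (\<phi> a) = 0))"

inductive_set prod_span :: "'a cba \<Rightarrow> 'a set" for A :: "'a cba" where
  zero: "ba_zero A \<in> prod_span A"
| prod: "a \<in> ba_car A \<Longrightarrow> b \<in> ba_car A \<Longrightarrow> ba_mul A a b \<in> prod_span A"
| add: "x \<in> prod_span A \<Longrightarrow> y \<in> prod_span A \<Longrightarrow> ba_add A x y \<in> prod_span A"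
| smul: "x \<in> prod_span A \<Longrightarrow> ba_smul A c x \<in> prod_span A"

definition dense_in :: "'a cba \<Rightarrow> 'a set \<Rightarrow> bool" where
  "dense_in A S \<longleftrightarrow>
     (\<forall>x\<in>ba_car A. \<forall>e>0. \<exists>y\<in>S. ba_norm A (ba_diff A x y) < e)"

end

theory Submission
  imports Defs
begin

locale BAlg =
  fixes A :: "'a cba"
  assumes BA: "banach_algebra A"
begin

abbreviation "V \<equiv> ba_car A"
abbreviation "pl \<equiv> ba_add A"
abbreviation "sm \<equiv> ba_smul A"
abbreviation "zr \<equiv> ba_zero A"
abbreviation "nm \<equiv> ba_norm A"

lemma zr_in[simp]: "zr \<in> V" using BA unfolding banach_algebra_def by auto
lemma pl_in[simp]: "x \<in> V \<Longrightarrow> y \<in> V \<Longrightarrow> pl x y \<in> V" using BA unfolding banach_algebra_def by auto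
lemma sm_in[simp]: "x \<in> V \<Longrightarrow> sm c x \<in> V" using BA unfolding banach_algebra_def by auto
lemma mul_in[simp]: "x \<in> V \<Longrightarrow> y \<in> V \<Longrightarrow> ba_mul A x y \<in> V" using BA unfolding banach_algebra_def by auto
lemma pl_assoc: "x \<in> V \<Longrightarrow> y \<in> V \<Longrightarrow> w \<in> V \<Longrightarrow> pl (pl x y) w = pl x (pl y w)"
  using BA unfolding banach_algebra_def by auto
lemma pl_comm: "x \<in> V \<Longrightarrow> y \<in> V \<Longrightarrow> pl x y = pl y x"
  using BA unfolding banach_algebra_def by auto
lemma pl_zr[simp]: "x \<in> V \<Longrightarrow> pl x zr = x"
  using BA unfolding banach_algebra_def by auto
lemma pl_neg: "x \<in> V \<Longrightarrow> pl x (sm (-1) x) = zr"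
  using BA unfolding banach_algebra_def by auto
lemma sm_one[simp]: "x \<in> V \<Longrightarrow> sm 1 x = x"
  using BA unfolding banach_algebra_def by auto
lemma sm_sm[simp]: "x \<in> V \<Longrightarrow> sm a (sm b x) = sm (a*b) x"
  using BA unfolding banach_algebra_def by auto
lemma sm_plus: "x \<in> V \<Longrightarrow> sm (a+b) x = pl (sm a x) (sm b x)"
  using BA unfolding banach_algebra_def by auto
lemma sm_pl: "x \<in> V \<Longrightarrow> y \<in> V \<Longrightarrow> sm a (pl x y) = pl (sm a x) (sm a y)"
  using BA unfolding banach_algebra_def by auto
lemma nm_nonneg[simp]: "x \<in> V \<Longrightarrow> 0 \<le> nm x"
  using BA unfolding banach_algebra_def by auto
lemma nm_zero: "x \<in> V \<Longrightarrow> nm x = 0 \<longleftrightarrow> x = zr"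
  using BA unfolding banach_algebra_def by auto
lemma nm_tri: "x \<in> V \<Longrightarrow> y \<in> V \<Longrightarrow> nm (pl x y) \<le> nm x + nm y"
  using BA unfolding banach_algebra_def by auto
lemma nm_sm: "x \<in> V \<Longrightarrow> nm (sm a x) = cmod a * nm x"
  using BA unfolding banach_algebra_def by auto

lemma pl_lcomm: "x \<in> V \<Longrightarrow> y \<in> V \<Longrightarrow> w \<in> V \<Longrightarrow> pl x (pl y w) = pl y (pl x w)"
  by (metis pl_assoc pl_comm)

lemmas pl_ac = pl_assoc pl_comm pl_lcomm

lemma zr_pl[simp]: "x \<in> V \<Longrightarrow> pl zr x = x" by (metis pl_comm pl_zr zr_in)

lemma sm_zero[simp]: "x \<in> V \<Longrightarrow> sm 0 x = zr"
proof -
  assume x: "x \<in> V"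
  let ?y = "sm 0 x"
  have yy: "pl ?y ?y = ?y" using sm_plus[OF x, of 0 0] by simp
  have "zr = pl ?y (sm (-1) ?y)" using pl_neg x by (metis sm_in)
  also have "\<dots> = pl (pl ?y ?y) (sm (-1) ?y)" using yy by simp
  also have "\<dots> = pl ?y (pl ?y (sm (-1) ?y))" using x by (simp add: pl_assoc)
  also have "\<dots> = ?y" using x pl_neg[of ?y] by (metis sm_in pl_zr)
  finally show ?thesis by simp
qed

lemma sm_zr[simp]: "sm c zr = zr"
  by (metis mult_zero_right sm_sm sm_zero zr_in)

lemma combine: "x \<in> V \<Longrightarrow> pl (sm a x) (sm b x) = sm (a+b) x" by (simp add: sm_plus)
lemma combine2: "x \<in> V \<Longrightarrow> w \<in> V \<Longrightarrow> pl (sm a x) (pl (sm b x) w) = pl (sm (a+b) x) w"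
  by (simp add: sm_plus pl_assoc)

lemma neg_sm: "x \<in> V \<Longrightarrow> pl (sm a x) (sm (-a) x) = zr"
  by (simp add: combine)

lemma cancel_to: "x \<in> V \<Longrightarrow> x' \<in> V \<Longrightarrow> pl x' (sm (-1) x) = zr \<Longrightarrow> x' = x"
proof -
  assume x: "x \<in> V" and x': "x' \<in> V" and h: "pl x' (sm (-1) x) = zr"
  have "x' = pl x' (pl (sm (-1) x) x)" using x x' pl_neg[OF x] by (simp add: pl_comm)
  also have "\<dots> = pl (pl x' (sm (-1) x)) x" using x x' by (simp add: pl_assoc)
  also have "\<dots> = x" using h x by simp
  finally show ?thesis .
qed

lemma solve_lin:
  assumes x: "x \<in> V" and x': "x' \<in> V" and y: "y \<in> V"
    and h: "pl x (sm a y) = pl x' (sm b y)"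
  shows "sm (a-b) y = pl x' (sm (-1) x)"
proof -
  let ?w = "pl (sm (-1) x) (sm (-b) y)"
  have "pl (pl x (sm a y)) ?w = pl (pl x (sm (-1) x)) (pl (sm a y) (sm (-b) y))"
    using x y by (simp add: pl_ac)
  also have "\<dots> = sm (a-b) y" using x y by (simp add: pl_neg combine)
  finally have L: "pl (pl x (sm a y)) ?w = sm (a-b) y" .
  have "pl (pl x' (sm b y)) ?w = pl (pl x' (sm (-1) x)) (pl (sm b y) (sm (-b) y))"
    using x x' y by (simp add: pl_ac)
  also have "\<dots> = pl x' (sm (-1) x)" using x x' y by (simp add: neg_sm)
  finally have R: "pl (pl x' (sm b y)) ?w = pl x' (sm (-1) x)" .
  show ?thesis using L R h by simp
qed

definition valid :: "('a \<times> real) set \<Rightarrow> bool" where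
  "valid G \<longleftrightarrow> (zr, 0) \<in> G \<and> (\<forall>x a. (x,a) \<in> G \<longrightarrow> x \<in> V \<and> a \<le> nm x) \<and>
     (\<forall>x a a'. (x,a) \<in> G \<longrightarrow> (x,a') \<in> G \<longrightarrow> a = a') \<and>
     (\<forall>x a x' a'. (x,a) \<in> G \<longrightarrow> (x',a') \<in> G \<longrightarrow> (pl x x', a + a') \<in> G) \<and>
     (\<forall>x a r. (x,a) \<in> G \<longrightarrow> (sm (of_real r) x, r * a) \<in> G)"

lemma validD:
  assumes "valid G"
  shows "(zr, 0) \<in> G" "(x,a) \<in> G \<Longrightarrow> x \<in> V" "(x,a) \<in> G \<Longrightarrow> a \<le> nm x"
    "(x,a) \<in> G \<Longrightarrow> (x,a') \<in> G \<Longrightarrow> a = a'"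
    "(x,a) \<in> G \<Longrightarrow> (x',a') \<in> G \<Longrightarrow> (pl x x', a + a') \<in> G"
    "(x,a) \<in> G \<Longrightarrow> (sm (of_real r) x, r * a) \<in> G"
  using assms unfolding valid_def by blast+

definition ext :: "('a \<times> real) set \<Rightarrow> 'a \<Rightarrow> real \<Rightarrow> ('a \<times> real) set" where
  "ext G y c = {(pl x (sm (of_real t) y), a + t * c) | x a t. (x,a) \<in> G}"

lemma ext_valid:
  assumes G: "valid G" and y: "y \<in> V" and ny: "\<forall>a. (y,a) \<notin> G"
    and dom: "\<forall>x a t. (x,a) \<in> G \<longrightarrow> a + t*c \<le> nm (pl x (sm (of_real t) y))"
  shows "valid (ext G y c)" "G \<subseteq> ext G y c" "(y, c) \<in> ext G y c"
proof -
  show "G \<subseteq> ext G y c"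
  proof
    fix p assume "p \<in> G"
    then obtain x a where p: "p = (x,a)" "(x,a) \<in> G" by (cases p) auto
    then have "x \<in> V" using validD(2)[OF G] by blast
    then have "p = (pl x (sm (of_real 0) y), a + 0 * c)" using p y by simp
    then show "p \<in> ext G y c" unfolding ext_def using p by blast
  qed
  have "(y, c) = (pl zr (sm (of_real 1) y), 0 + 1 * c)" using y by simp
  then show "(y, c) \<in> ext G y c" unfolding ext_def using validD(1)[OF G] by blast
  show "valid (ext G y c)"
    unfolding valid_def
  proof (intro conjI allI impI)
    have "(zr, 0) = (pl zr (sm (of_real 0) y), 0 + 0 * c)" using y by simp
    then show "(zr, 0) \<in> ext G y c" unfolding ext_def using validD(1)[OF G] by blast
  next
    fix w b assume "(w, b) \<in> ext G y c"
    then obtain x a t where "(x,a) \<in> G" "w = pl x (sm (of_real t) y)" "b = a + t * c"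
      unfolding ext_def by blast
    then show "w \<in> V" using dom validD(2)[OF G] y by auto
  next
    fix w b assume "(w, b) \<in> ext G y c"
    then obtain x a t where "(x,a) \<in> G" "w = pl x (sm (of_real t) y)" "b = a + t * c"
      unfolding ext_def by blast
    then show "b \<le> nm w" using dom validD(2)[OF G] y by auto
  next
    fix w b b' assume "(w, b) \<in> ext G y c" "(w, b') \<in> ext G y c"
    then obtain x a t x' a' t' where xa: "(x,a) \<in> G" "w = pl x (sm (of_real t) y)" "b = a + t * c"
      and xa': "(x',a') \<in> G" "w = pl x' (sm (of_real t') y)" "b' = a' + t' * c"
      unfolding ext_def by blast
    have xV: "x \<in> V" and x'V: "x' \<in> V" using xa xa' validD(2)[OF G] by auto
    have eq: "sm (of_real t - of_real t') y = pl x' (sm (-1) x)"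
      using solve_lin[OF xV x'V y] xa xa' by simp
    have m: "(pl x' (sm (-1) x), a' + (-1) * a) \<in> G"
      using validD(5,6)[OF G] xa xa' by (metis of_real_1 of_real_minus)
    have tt: "t = t'"
    proof (rule ccontr)
      assume ne: "t \<noteq> t'"
      have "sm (of_real (1/(t-t'))) (pl x' (sm (-1) x)) = sm (of_real (1/(t-t'))) (sm (of_real t - of_real t') y)"
        using eq by (simp only:)
      also have "\<dots> = sm (of_real (1/(t-t')) * (of_real t - of_real t')) y"
        by (rule sm_sm[OF y])
      also have "of_real (1/(t-t')) * (of_real t - of_real t') = (1::complex)"
        using ne by (simp add: field_simps flip: of_real_diff)
      finally have "y = sm (of_real (1/(t-t'))) (pl x' (sm (-1) x))" using y by simp
      then have "(y, (1/(t-t')) * (a' + (-1) * a)) \<in> G" using validD(6)[OF G m, of "1/(t-t')"] by (simp only:)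
      then show False using ny by blast
    qed
    then have "pl x' (sm (-1) x) = zr" using eq y by simp
    then have "x' = x" using cancel_to xV x'V by blast
    then have "a = a'" using validD(4)[OF G] xa xa' by blast
    then show "b = b'" using xa xa' tt by simp
  next
    fix w b w' b' assume "(w, b) \<in> ext G y c" "(w', b') \<in> ext G y c"
    then obtain x a t x' a' t' where xa: "(x,a) \<in> G" "w = pl x (sm (of_real t) y)" "b = a + t * c"
      and xa': "(x',a') \<in> G" "w' = pl x' (sm (of_real t') y)" "b' = a' + t' * c"
      unfolding ext_def by blast
    have xV: "x \<in> V" and x'V: "x' \<in> V" using xa xa' validD(2)[OF G] by auto
    have "pl w w' = pl (pl x x') (pl (sm (of_real t) y) (sm (of_real t') y))"
      using xa xa' xV x'V y by (simp add: pl_ac)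
    also have "\<dots> = pl (pl x x') (sm (of_real (t+t')) y)" using y by (simp add: combine)
    finally have "(pl w w', b + b') = (pl (pl x x') (sm (of_real (t+t')) y), (a + a') + (t+t') * c)"
      using xa xa' by (simp add: algebra_simps)
    moreover have "(pl x x', a + a') \<in> G" using validD(5)[OF G] xa xa' by blast
    ultimately show "(pl w w', b + b') \<in> ext G y c" unfolding ext_def by blast
  next
    fix w b r assume "(w, b) \<in> ext G y c"
    then obtain x a t where xa: "(x,a) \<in> G" "w = pl x (sm (of_real t) y)" "b = a + t * c"
      unfolding ext_def by blast
    have xV: "x \<in> V" using xa validD(2)[OF G] by auto
    have "sm (of_real r) w = pl (sm (of_real r) x) (sm (of_real (r*t)) y)"
      using xa xV y by (simp add: sm_pl)
    then have "(sm (of_real r) w, r * b) = (pl (sm (of_real r) x) (sm (of_real (r*t)) y), r * a + (r*t) * c)"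
      using xa by (simp add: algebra_simps)
    moreover have "(sm (of_real r) x, r * a) \<in> G" using validD(6)[OF G] xa by blast
    ultimately show "(sm (of_real r) w, r * b) \<in> ext G y c" unfolding ext_def by blast
  qed
qed

lemma key_ineq:
  assumes G: "valid G" and y: "y \<in> V" and xa: "(x,a) \<in> G" and xa': "(x',a') \<in> G"
  shows "a' - nm (pl x' (sm (-1) y)) \<le> nm (pl x y) - a"
proof -
  have xV: "x \<in> V" and x'V: "x' \<in> V" using xa xa' validD(2)[OF G] by auto
  have "a + a' \<le> nm (pl x x')" using validD(3,5)[OF G] xa xa' by blast
  also have "pl x x' = pl (pl x y) (pl x' (sm (-1) y))"
  proof -
    have "pl (pl x y) (pl x' (sm (-1) y)) = pl (pl x x') (pl y (sm (-1) y))"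
      using xV x'V y by (simp add: pl_ac)
    then show ?thesis using xV x'V y by (simp add: pl_neg)
  qed
  also have "nm \<dots> \<le> nm (pl x y) + nm (pl x' (sm (-1) y))" using xV x'V y by (simp add: nm_tri)
  finally show ?thesis by simp
qed

lemma exists_c:
  assumes G: "valid G" and y: "y \<in> V"
  shows "\<exists>c. \<forall>x a t. (x,a) \<in> G \<longrightarrow> a + t*c \<le> nm (pl x (sm (of_real t) y))"
proof -
  define T where "T = {a - nm (pl x (sm (-1) y)) | x a. (x,a) \<in> G}"
  define c where "c = Sup T"
  have ne: "T \<noteq> {}" unfolding T_def using validD(1)[OF G] by blast
  have upper: "\<And>u. u \<in> T \<Longrightarrow> u \<le> c"
  proof -
    have "bdd_above T" unfolding bdd_above_def T_def
      using key_ineq[OF G y validD(1)[OF G]] by blast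
    then show "\<And>u. u \<in> T \<Longrightarrow> u \<le> c" unfolding c_def by (simp add: cSup_upper)
  qed
  have least: "\<And>x a. (x,a) \<in> G \<Longrightarrow> c \<le> nm (pl x y) - a"
    unfolding c_def using ne by (auto intro!: cSup_least simp: T_def key_ineq[OF G y])
  show ?thesis
  proof (rule exI[of _ c], intro allI impI)
    fix x a and t :: real assume xa: "(x,a) \<in> G"
    have xV: "x \<in> V" using xa validD(2)[OF G] by auto
    consider "t = 0" | "t > 0" | "t < 0" using linorder_less_linear[of t 0] by blast
    then show "a + t*c \<le> nm (pl x (sm (of_real t) y))"
    proof cases
      case 1 then show ?thesis using validD(3)[OF G xa] xV y by simp
    next
      case 2
      have m: "(sm (of_real (1/t)) x, (1/t) * a) \<in> G" using validD(6)[OF G xa] .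
      have "c \<le> nm (pl (sm (of_real (1/t)) x) y) - (1/t) * a" using least[OF m] .
      then have "t * c \<le> t * nm (pl (sm (of_real (1/t)) x) y) - a"
        using 2 by (simp add: field_simps)
      also have "t * nm (pl (sm (of_real (1/t)) x) y) = nm (sm (of_real t) (pl (sm (of_real (1/t)) x) y))"
        using 2 xV y by (simp add: nm_sm)
      also have "sm (of_real t) (pl (sm (of_real (1/t)) x) y) = pl x (sm (of_real t) y)"
        using 2 xV y by (simp add: sm_pl flip: of_real_mult)
      finally show ?thesis by simp
    next
      case 3
      define s where "s = -t"
      have s: "s > 0" using 3 s_def by simp
      have m: "(sm (of_real (1/s)) x, (1/s) * a) \<in> G" using validD(6)[OF G xa] .
      have "(1/s) * a - nm (pl (sm (of_real (1/s)) x) (sm (-1) y)) \<le> c"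
        using upper T_def m by blast
      then have "a - s * nm (pl (sm (of_real (1/s)) x) (sm (-1) y)) \<le> s * c"
        using s by (simp add: field_simps)
      also have "s * nm (pl (sm (of_real (1/s)) x) (sm (-1) y)) = nm (sm (of_real s) (pl (sm (of_real (1/s)) x) (sm (-1) y)))"
        using s xV y by (simp add: nm_sm)
      also have "sm (of_real s) (pl (sm (of_real (1/s)) x) (sm (-1) y)) = pl x (sm (of_real t) y)"
        using s xV y by (simp add: sm_pl s_def flip: of_real_mult)
      finally show ?thesis using s_def by simp
    qed
  qed
qed

lemma HB:
  assumes G0: "valid G0"
  shows "\<exists>G. valid G \<and> G0 \<subseteq> G \<and> (\<forall>y\<in>V. \<exists>a. (y,a) \<in> G)"
proof -
  define F where "F = {G. valid G \<and> G0 \<subseteq> G}"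
  have "\<exists>M\<in>F. \<forall>X\<in>F. M \<subseteq> X \<longrightarrow> X = M"
  proof (rule subset_Zorn_nonempty)
    show "F \<noteq> {}" using G0 F_def by blast
  next
    fix C assume Cne: "C \<noteq> {}" and ch: "subset.chain F C"
    have CF: "C \<subseteq> F" and tot: "\<And>X Y. X \<in> C \<Longrightarrow> Y \<in> C \<Longrightarrow> X \<subseteq> Y \<or> Y \<subseteq> X"
      using ch by (auto simp: subset.chain_def)
    have vC: "\<And>X. X \<in> C \<Longrightarrow> valid X" and sC: "\<And>X. X \<in> C \<Longrightarrow> G0 \<subseteq> X" using CF F_def by auto
    obtain X0 where X0: "X0 \<in> C" using Cne by blast
    have "valid (\<Union>C)" unfolding valid_def
    proof (intro conjI allI impI)
      show "(zr, 0) \<in> \<Union>C" using X0 validD(1)[OF vC[OF X0]] by blast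
    next
      fix x a assume "(x,a) \<in> \<Union>C" then show "x \<in> V" using vC validD(2) by blast
    next
      fix x a assume "(x,a) \<in> \<Union>C" then show "a \<le> nm x" using vC validD(3) by blast
    next
      fix x a a' assume h: "(x,a) \<in> \<Union>C" "(x,a') \<in> \<Union>C"
      then obtain X Y where "X \<in> C" "Y \<in> C" "(x,a) \<in> X" "(x,a') \<in> Y" by blast
      then show "a = a'" using tot[of X Y] vC validD(4) by blast
    next
      fix x a x' a' assume h: "(x,a) \<in> \<Union>C" "(x',a') \<in> \<Union>C"
      then obtain X Y where XY: "X \<in> C" "Y \<in> C" "(x,a) \<in> X" "(x',a') \<in> Y" by blast
      then show "(pl x x', a + a') \<in> \<Union>C"
        using tot[of X Y] vC validD(5) by (metis UnionI subsetD)
    next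
      fix x a r assume "(x,a) \<in> \<Union>C"
      then show "(sm (of_real r) x, r * a) \<in> \<Union>C" using vC validD(6) by blast
    qed
    then show "\<Union>C \<in> F" using F_def sC X0 by blast
  qed
  then obtain M where MF: "M \<in> F" and max: "\<forall>X\<in>F. M \<subseteq> X \<longrightarrow> X = M" by blast
  have vM: "valid M" and sM: "G0 \<subseteq> M" using MF F_def by auto
  have "\<forall>y\<in>V. \<exists>a. (y,a) \<in> M"
  proof (rule ballI, rule ccontr)
    fix y assume y: "y \<in> V" and ny: "\<not> (\<exists>a. (y,a) \<in> M)"
    obtain c where c: "\<forall>x a t. (x,a) \<in> M \<longrightarrow> a + t*c \<le> nm (pl x (sm (of_real t) y))"
      using exists_c[OF vM y] by blast
    have ny': "\<forall>a. (y,a) \<notin> M" using ny by blast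
    note e = ext_valid[OF vM y ny' c]
    have "ext M y c \<in> F" using e sM F_def by blast
    then have "ext M y c = M" using max e(2) by blast
    then show False using e(3) ny by auto
  qed
  then show ?thesis using vM sM by blast
qed

lemma prod_span_sub: "prod_span A \<subseteq> V"
proof
  fix x assume "x \<in> prod_span A"
  then show "x \<in> V" by (induction rule: prod_span.induct) simp_all
qed

lemma nm_zr[simp]: "nm zr = 0" using nm_zero by simp

lemma separate:
  assumes SV: "S \<subseteq> V" and Sz: "zr \<in> S" and Sadd: "\<forall>x\<in>S. \<forall>y\<in>S. pl x y \<in> S"
    and Ssm: "\<forall>c. \<forall>x\<in>S. sm c x \<in> S"
    and x0: "x0 \<in> V" and e: "e > 0" and far: "\<forall>m\<in>S. e \<le> nm (ba_diff A x0 m)"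
  shows "\<exists>f. (\<forall>x\<in>V. \<forall>y\<in>V. f (pl x y) = f x + f y) \<and> (\<forall>c. \<forall>x\<in>V. f (sm c x) = c * f x) \<and>
             (\<forall>x\<in>V. cmod (f x) \<le> 2 * nm x) \<and> (\<forall>m\<in>S. f m = 0) \<and> f x0 \<noteq> 0"
proof -
  define GS where "GS = {(m, 0::real) | m. m \<in> S}"
  have vGS: "valid GS" unfolding valid_def GS_def using SV Sz Sadd Ssm by auto
  have nx0: "x0 \<notin> S"
  proof
    assume "x0 \<in> S"
    then have "e \<le> nm (ba_diff A x0 x0)" using far by blast
    also have "ba_diff A x0 x0 = zr" using x0 pl_neg by (simp add: ba_diff_def)
    finally show False using e by simp
  qed
  have ny: "\<forall>a. (x0,a) \<notin> GS" using nx0 GS_def by auto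
  have dom: "\<forall>x a t. (x,a) \<in> GS \<longrightarrow> a + t*e \<le> nm (pl x (sm (of_real t) x0))"
  proof (intro allI impI)
    fix x a and t :: real assume "(x,a) \<in> GS"
    then have xS: "x \<in> S" and a: "a = 0" using GS_def by auto
    have xV: "x \<in> V" using xS SV by blast
    show "a + t*e \<le> nm (pl x (sm (of_real t) x0))"
    proof (cases "t > 0")
      case False
      then have "t * e \<le> 0" using e by (simp add: mult_nonpos_nonneg)
      then show ?thesis using a xV x0 by (smt (verit) nm_nonneg pl_in sm_in)
    next
      case True
      have mS: "sm (of_real (-1/t)) x \<in> S" using Ssm xS by blast
      have "e \<le> nm (ba_diff A x0 (sm (of_real (-1/t)) x))" using far mS by blast
      also have "ba_diff A x0 (sm (of_real (-1/t)) x) = pl x0 (sm (of_real (1/t)) x)"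
        using xV by (simp add: ba_diff_def)
      finally have "t * e \<le> t * nm (pl x0 (sm (of_real (1/t)) x))" using True by simp
      also have "\<dots> = nm (sm (of_real t) (pl x0 (sm (of_real (1/t)) x)))"
        using True x0 xV by (simp add: nm_sm)
      also have "sm (of_real t) (pl x0 (sm (of_real (1/t)) x)) = pl x (sm (of_real t) x0)"
        using True x0 xV by (simp add: sm_pl pl_comm flip: of_real_mult)
      finally show ?thesis using a by simp
    qed
  qed
  note e0 = ext_valid[OF vGS x0 ny dom]
  obtain G where vG: "valid G" and sG: "ext GS x0 e \<subseteq> G" and tot: "\<forall>y\<in>V. \<exists>a. (y,a) \<in> G"
    using HB[OF e0(1)] by blast
  define g where "g y = (SOME a. (y,a) \<in> G)" for y
  have gP: "\<And>y. y \<in> V \<Longrightarrow> (y, g y) \<in> G" unfolding g_def using tot by (metis someI_ex)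
  have gU: "\<And>y a. (y,a) \<in> G \<Longrightarrow> g y = a"
    using gP validD(2,4)[OF vG] by metis
  have g_add: "\<And>x y. x \<in> V \<Longrightarrow> y \<in> V \<Longrightarrow> g (pl x y) = g x + g y"
    using gP gU validD(5)[OF vG] by metis
  have g_sm: "\<And>r x. x \<in> V \<Longrightarrow> g (sm (of_real r) x) = r * g x"
    using gP gU validD(6)[OF vG] by metis
  have g_le: "\<And>x. x \<in> V \<Longrightarrow> g x \<le> nm x"
    using gP validD(3)[OF vG] by metis
  have g_abs: "\<And>x. x \<in> V \<Longrightarrow> \<bar>g x\<bar> \<le> nm x"
  proof -
    fix x assume x: "x \<in> V"
    have "- g x = g (sm (of_real (-1)) x)" using g_sm[OF x, of "-1"] by simp
    also have "\<dots> \<le> nm (sm (of_real (-1)) x)" using g_le x by simp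
    also have "\<dots> = nm x" using x by (simp add: nm_sm)
    finally show "\<bar>g x\<bar> \<le> nm x" using g_le[OF x] by linarith
  qed
  have gS: "\<And>m. m \<in> S \<Longrightarrow> g m = 0"
    using gU e0(2) sG GS_def by blast
  have gx0: "g x0 = e" using gU e0(3) sG by blast
  have g_c: "\<And>c y. y \<in> V \<Longrightarrow> g (sm c y) = Re c * g y + Im c * g (sm \<i> y)"
  proof -
    fix c y assume y: "y \<in> V"
    have "sm c y = sm (of_real (Re c) + of_real (Im c) * \<i>) y" 
    proof -
      have "of_real (Re c) + of_real (Im c) * \<i> = c" by (simp add: complex_eq_iff)
      then show ?thesis by simp
    qed
    also have "\<dots> = pl (sm (of_real (Re c)) y) (sm (of_real (Im c)) (sm \<i> y))"
      using y by (simp add: sm_plus)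
    finally show "g (sm c y) = Re c * g y + Im c * g (sm \<i> y)"
      using y by (simp add: g_add g_sm del: sm_sm)
  qed
  define f where "f y = complex_of_real (g y) - \<i> * complex_of_real (g (sm \<i> y))" for y
  have f_add: "\<forall>x\<in>V. \<forall>y\<in>V. f (pl x y) = f x + f y"
    unfolding f_def by (simp add: sm_pl g_add algebra_simps)
  have f_sm: "\<forall>c. \<forall>x\<in>V. f (sm c x) = c * f x"
  proof (intro allI ballI)
    fix c x assume x: "x \<in> V"
    have "g (sm \<i> (sm c x)) = g (sm (\<i> * c) x)" using x by simp
    also have "\<dots> = - Im c * g x + Re c * g (sm \<i> x)" using g_c[OF x, of "\<i> * c"] by simp
    finally show "f (sm c x) = c * f x"
      unfolding f_def using g_c[OF x, of c] by (simp add: complex_eq_iff algebra_simps)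
  qed
  have f_bd: "\<forall>x\<in>V. cmod (f x) \<le> 2 * nm x"
  proof
    fix x assume x: "x \<in> V"
    have "cmod (f x) \<le> cmod (complex_of_real (g x)) + cmod (\<i> * complex_of_real (g (sm \<i> x)))"
      unfolding f_def by (rule norm_triangle_ineq4)
    also have "\<dots> = \<bar>g x\<bar> + \<bar>g (sm \<i> x)\<bar>" by (simp add: norm_mult)
    also have "\<dots> \<le> nm x + nm (sm \<i> x)" using g_abs x by (simp add: add_mono)
    also have "nm (sm \<i> x) = nm x" using x by (simp add: nm_sm)
    finally show "cmod (f x) \<le> 2 * nm x" by simp
  qed
  have fS: "\<forall>m\<in>S. f m = 0" unfolding f_def using gS Ssm by simp
  have "Re (f x0) = e" unfolding f_def using gx0 by simp
  then have "f x0 \<noteq> 0" using e by auto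
  then show ?thesis using f_add f_sm f_bd fS by blast
qed

end


theorem theorem3p2:
  fixes A :: "'a cba"
  assumes "banach_algebra A"
    and "super_weakly_amenable A"
  shows "dense_in A (prod_span A) \<and>
         (\<forall>\<phi> d. cont_functional A \<phi> \<and>
            (\<forall>a\<in>ba_car A. \<forall>b\<in>ba_car A. \<phi> (ba_mul A a b) = \<phi> a * \<phi> b) \<and>
            (\<exists>a\<in>ba_car A. \<phi> a \<noteq> 0) \<and>
            cont_functional A d \<and>
            (\<forall>a\<in>ba_car A. \<forall>b\<in>ba_car A. d (ba_mul A a b) = d a * \<phi> b + \<phi> a * d b)
            \<longrightarrow> (\<forall>a\<in>ba_car A. d a = 0))"
proof -
  interpret BAlg A using assms(1) by unfold_locales
  have hom: "cont_hom A A id"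
    unfolding cont_hom_def by (auto intro!: exI[of _ 1])
  have swa: "\<And>d. dual_derivation A A id d \<Longrightarrow> \<forall>a\<in>V. \<forall>b\<in>V. d a b + d b a = 0"
  proof -
    fix d assume dd: "dual_derivation A A id d"
    have "\<forall>(B::'a cba). \<forall>\<phi> d. banach_algebra B \<and> cont_hom A B \<phi> \<and> dual_derivation A B \<phi> d \<longrightarrow>
        (\<forall>a\<in>ba_car A. \<forall>b\<in>ba_car A. d a (\<phi> b) + d b (\<phi> a) = 0)"
      using assms(2) unfolding super_weakly_amenable_def .
    then have "\<forall>a\<in>ba_car A. \<forall>b\<in>ba_car A. d a (id b) + d b (id a) = 0"
      using assms(1) hom dd by blast
    then show "\<forall>a\<in>V. \<forall>b\<in>V. d a b + d b a = 0" by simp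
  qed
  have part1: "dense_in A (prod_span A)"
    unfolding dense_in_def
  proof (rule ccontr)
    assume "\<not> (\<forall>x\<in>V. \<forall>e>0. \<exists>y\<in>prod_span A. nm (ba_diff A x y) < e)"
    then obtain x0 e where x0: "x0 \<in> V" and e: "e > 0"
      and far: "\<forall>m\<in>prod_span A. e \<le> nm (ba_diff A x0 m)" by (meson not_less)
    have SV: "prod_span A \<subseteq> V" using prod_span_sub by blast
    have Sadd: "\<forall>x\<in>prod_span A. \<forall>y\<in>prod_span A. pl x y \<in> prod_span A"
      by (simp add: prod_span.add)
    have Ssm: "\<forall>c. \<forall>x\<in>prod_span A. sm c x \<in> prod_span A"
      by (simp add: prod_span.smul)
    obtain f where fH: "(\<forall>x\<in>V. \<forall>y\<in>V. f (pl x y) = f x + f y) \<and> (\<forall>c. \<forall>x\<in>V. f (sm c x) = c * f x) \<and>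
             (\<forall>x\<in>V. cmod (f x) \<le> 2 * nm x) \<and> (\<forall>m\<in>prod_span A. f m = 0) \<and> f x0 \<noteq> 0"
      using separate[OF SV prod_span.zero Sadd Ssm x0 e far] by (elim exE)
    have f_add: "\<forall>x\<in>V. \<forall>y\<in>V. f (pl x y) = f x + f y"
      and f_sm: "\<forall>c. \<forall>x\<in>V. f (sm c x) = c * f x"
      and f_bd: "\<forall>x\<in>V. cmod (f x) \<le> 2 * nm x"
      and fS: "\<forall>m\<in>prod_span A. f m = 0" and fx0: "f x0 \<noteq> 0"
      using fH by simp_all
    define d where "d a x = f a * f x" for a x
    have fmul: "f (ba_mul A a b) = 0" if "a \<in> V" "b \<in> V" for a b
      using fS prod_span.prod[OF that] by simp
    have "dual_derivation A A id d"
      unfolding dual_derivation_def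
    proof (intro conjI ballI allI)
      fix a assume a: "a \<in> V"
      show "cont_functional A (d a)"
        unfolding cont_functional_def d_def
      proof (intro conjI ballI allI)
        show "\<exists>K. \<forall>x\<in>V. cmod (f a * f x) \<le> K * nm x"
        proof (intro exI ballI)
          fix x assume x: "x \<in> V"
          have "cmod (f a * f x) = cmod (f a) * cmod (f x)" by (simp add: norm_mult)
          also have "\<dots> \<le> cmod (f a) * (2 * nm x)" using f_bd x by (simp add: mult_left_mono)
          finally show "cmod (f a * f x) \<le> (cmod (f a) * 2) * nm x" by simp
        qed
      next
        fix x y assume "x \<in> V" "y \<in> V"
        then show "f a * f (pl x y) = f a * f x + f a * f y" using f_add by (simp add: distrib_left)
      next
        fix c x assume "x \<in> V"
        then show "f a * f (sm c x) = c * (f a * f x)" using f_sm by simp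
      qed
    next
      show "\<exists>K. \<forall>a\<in>V. \<forall>x\<in>V. cmod (d a x) \<le> K * nm a * nm x"
      proof (intro exI ballI)
        fix a x assume a: "a \<in> V" and x: "x \<in> V"
        have "cmod (d a x) = cmod (f a) * cmod (f x)" by (simp add: norm_mult d_def)
        also have "\<dots> \<le> (2 * nm a) * (2 * nm x)"
          using f_bd a x by (intro mult_mono) simp_all
        finally show "cmod (d a x) \<le> 4 * nm a * nm x" by simp
      qed
    next
      fix a b x assume "a \<in> V" "b \<in> V" "x \<in> V"
      then show "d (pl a b) x = d a x + d b x" using f_add by (simp add: d_def distrib_right)
    next
      fix c a x assume "a \<in> V" "x \<in> V"
      then show "d (sm c a) x = c * d a x" using f_sm by (simp add: d_def)
    next
      fix a b x assume "a \<in> V" "b \<in> V" "x \<in> V"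
      then show "d (ba_mul A a b) x = d a (ba_mul A (id b) x) + d b (ba_mul A x (id a))"
        using fmul by (simp add: d_def)
    qed
    then have "\<forall>a\<in>V. \<forall>b\<in>V. d a b + d b a = 0" by (rule swa)
    then have "d x0 x0 + d x0 x0 = 0" using x0 by blast
    then have "f x0 * f x0 + f x0 * f x0 = 0" unfolding d_def .
    then have "f x0 * f x0 = 0" by simp
    then show False using fx0 by simp
  qed
  have part2: "\<forall>\<phi> d. cont_functional A \<phi> \<and>
            (\<forall>a\<in>V. \<forall>b\<in>V. \<phi> (ba_mul A a b) = \<phi> a * \<phi> b) \<and>
            (\<exists>a\<in>V. \<phi> a \<noteq> 0) \<and>
            cont_functional A d \<and>
            (\<forall>a\<in>V. \<forall>b\<in>V. d (ba_mul A a b) = d a * \<phi> b + \<phi> a * d b)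
            \<longrightarrow> (\<forall>a\<in>V. d a = 0)"
  proof (intro allI impI)
    fix \<phi> d assume h: "cont_functional A \<phi> \<and>
            (\<forall>a\<in>V. \<forall>b\<in>V. \<phi> (ba_mul A a b) = \<phi> a * \<phi> b) \<and>
            (\<exists>a\<in>V. \<phi> a \<noteq> 0) \<and>
            cont_functional A d \<and>
            (\<forall>a\<in>V. \<forall>b\<in>V. d (ba_mul A a b) = d a * \<phi> b + \<phi> a * d b)"
    then have phil: "cont_functional A \<phi>" and phim: "\<forall>a\<in>V. \<forall>b\<in>V. \<phi> (ba_mul A a b) = \<phi> a * \<phi> b"
      and u: "\<exists>a\<in>V. \<phi> a \<noteq> 0" and dl: "cont_functional A d"
      and dder: "\<forall>a\<in>V. \<forall>b\<in>V. d (ba_mul A a b) = d a * \<phi> b + \<phi> a * d b" by auto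
    have p_add: "\<forall>x\<in>V. \<forall>y\<in>V. \<phi> (pl x y) = \<phi> x + \<phi> y"
      and p_sm: "\<forall>c. \<forall>x\<in>V. \<phi> (sm c x) = c * \<phi> x"
      using phil unfolding cont_functional_def by blast+
    have d_add: "\<forall>x\<in>V. \<forall>y\<in>V. d (pl x y) = d x + d y"
      and d_sm: "\<forall>c. \<forall>x\<in>V. d (sm c x) = c * d x"
      using dl unfolding cont_functional_def by blast+
    obtain Kp where Kp: "\<forall>x\<in>V. cmod (\<phi> x) \<le> Kp * nm x" using phil unfolding cont_functional_def by blast
    obtain Kd where Kd: "\<forall>x\<in>V. cmod (d x) \<le> Kd * nm x" using dl unfolding cont_functional_def by blast
    define D where "D a x = d a * \<phi> x" for a x
    have "dual_derivation A A id D"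
      unfolding dual_derivation_def
    proof (intro conjI ballI allI)
      fix a assume a: "a \<in> V"
      show "cont_functional A (D a)"
        unfolding cont_functional_def D_def
      proof (intro conjI ballI allI)
        show "\<exists>K. \<forall>x\<in>V. cmod (d a * \<phi> x) \<le> K * nm x"
        proof (intro exI ballI)
          fix x assume x: "x \<in> V"
          have "cmod (d a * \<phi> x) = cmod (d a) * cmod (\<phi> x)" by (simp add: norm_mult)
          also have "\<dots> \<le> cmod (d a) * (Kp * nm x)" using Kp x by (simp add: mult_left_mono)
          finally show "cmod (d a * \<phi> x) \<le> (cmod (d a) * Kp) * nm x" by simp
        qed
      next
        fix x y assume "x \<in> V" "y \<in> V"
        then show "d a * \<phi> (pl x y) = d a * \<phi> x + d a * \<phi> y" using p_add by (simp add: distrib_left)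
      next
        fix c x assume "x \<in> V"
        then show "d a * \<phi> (sm c x) = c * (d a * \<phi> x)" using p_sm by simp
      qed
    next
      show "\<exists>K. \<forall>a\<in>V. \<forall>x\<in>V. cmod (D a x) \<le> K * nm a * nm x"
      proof (intro exI ballI)
        fix a x assume a: "a \<in> V" and x: "x \<in> V"
        have "cmod (D a x) = cmod (d a) * cmod (\<phi> x)" by (simp add: norm_mult D_def)
        also have "\<dots> \<le> (Kd * nm a) * (Kp * nm x)"
        proof (rule mult_mono)
          show "cmod (d a) \<le> Kd * nm a" using Kd a by blast
          show "cmod (\<phi> x) \<le> Kp * nm x" using Kp x by blast
          show "0 \<le> Kd * nm a" using order_trans[OF norm_ge_zero \<open>cmod (d a) \<le> Kd * nm a\<close>] .
          show "0 \<le> cmod (\<phi> x)" by simp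
        qed
        finally show "cmod (D a x) \<le> (Kd * Kp) * nm a * nm x" by (simp add: algebra_simps)
      qed
    next
      fix a b x assume "a \<in> V" "b \<in> V" "x \<in> V"
      then show "D (pl a b) x = D a x + D b x" using d_add by (simp add: D_def distrib_right)
    next
      fix c a x assume "a \<in> V" "x \<in> V"
      then show "D (sm c a) x = c * D a x" using d_sm by (simp add: D_def)
    next
      fix a b x assume a: "a \<in> V" and b: "b \<in> V" and x: "x \<in> V"
      have "D (ba_mul A a b) x = (d a * \<phi> b + \<phi> a * d b) * \<phi> x"
        using dder a b by (simp add: D_def)
      also have "\<dots> = d a * (\<phi> b * \<phi> x) + d b * (\<phi> x * \<phi> a)" by (simp add: algebra_simps)
      also have "\<dots> = D a (ba_mul A (id b) x) + D b (ba_mul A x (id a))"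
        using phim a b x by (simp add: D_def)
      finally show "D (ba_mul A a b) x = D a (ba_mul A (id b) x) + D b (ba_mul A x (id a))" .
    qed
    then have "\<forall>a\<in>V. \<forall>b\<in>V. D a b + D b a = 0" by (rule swa)
    then have Z: "\<forall>a\<in>V. \<forall>b\<in>V. d a * \<phi> b + d b * \<phi> a = 0" unfolding D_def .
    obtain w where w: "w \<in> V" "\<phi> w \<noteq> 0" using u by blast
    have "d w * \<phi> w + d w * \<phi> w = 0" using Z w by blast
    then have "d w * \<phi> w = 0" by auto
    then have dw: "d w = 0" using w by simp
    show "\<forall>a\<in>V. d a = 0"
    proof
      fix a assume a: "a \<in> V"
      have "d a * \<phi> w + d w * \<phi> a = 0" using Z a w by blast
      then show "d a = 0" using dw w by simp
    qed
  qed
  show ?thesis using part1 part2 by blast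
qed

end
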